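(* Let $g \ge h \ge 2$ be integers. There is a constant $C>0$ depending only on $g$ and $h$ such that for every positive integer $n$ and every $C_h[g]$ set $A \subset \{1,2,\dots,n\}$, $$|A| \le (g-1)^{1/h}\, n^{1-\frac{1}{h}} + C\, n^{\frac{1}{2}-\frac{1}{2h}}.$$
   Context: A set of integers $A$ is called a $C_h[g]$ set if for every set $X$ of $h$ integers there do not exist $g$ distinct integers $k_1,\dots,k_g$ such that $X+k_i \subset A$ for all $i=1,\dots,g$ (here $X+k=\{x+k : x\in X\}$). In words, $A$ contains no $g$ distinct translates of a common $h$-element set. *)

theory Defs
  imports Complex_Main
begin

definition Ch_g_set :: "nat \<Rightarrow> nat \<Rightarrow> int set \<Rightarrow> bool" where
  "Ch_g_set h g A \<longleftrightarrow>
     (\<forall>X :: int set. finite X \<and> card X = h \<longrightarrow>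
        \<not> (\<exists>K :: int set. finite K \<and> card K = g \<and> (\<forall>k\<in>K. (\<lambda>x. x + k) ` X \<subseteq> A)))"

end

theory Submission
  imports Defs
begin


lemma count_le:
  assumes A: "A \<subseteq> {1..int n}" and C: "Ch_g_set h g A" and g: "g \<ge> 1"
  shows "(\<Sum>t\<in>{1 - int m..int n - 1}. card {x\<in>{1..int m}. x + t \<in> A} choose h) \<le> (g-1) * (m choose h)"
proof -
  define T where "T = {1 - int m..int n - 1}"
  define B where "B t = {x\<in>{1..int m}. x + t \<in> A}" for t
  define S where "S = {X. X \<subseteq> {1..int m} \<and> card X = h}"
  have finS: "finite S" unfolding S_def by (rule finite_subset[of _ "Pow {1..int m}"]) auto
  have cardS: "card S = m choose h" unfolding S_def using n_subsets[of "{1..int m}" h] by simp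
  have e1: "card (B t) choose h = (\<Sum>X\<in>S. if X \<subseteq> B t then 1 else 0)" for t
  proof -
    have "card (B t) choose h = card {X. X \<subseteq> B t \<and> card X = h}"
      by (rule n_subsets[symmetric]) (rule finite_subset[of _ "{1..int m}"], auto simp: B_def)
    also have "{X. X \<subseteq> B t \<and> card X = h} = {X\<in>S. X \<subseteq> B t}" unfolding S_def B_def by auto
    also have "card \<dots> = (\<Sum>X\<in>S. if X \<subseteq> B t then 1 else 0)"
      using sum.inter_filter[OF finS, of "\<lambda>_. (1::nat)" "\<lambda>X. X \<subseteq> B t"] by simp
    finally show ?thesis .
  qed
  have e2: "(\<Sum>t\<in>T. if X \<subseteq> B t then 1 else 0) \<le> g - 1" if "X \<in> S" for X
  proof -
    have "(\<Sum>t\<in>T. if X \<subseteq> B t then 1 else (0::nat)) = card {t\<in>T. X \<subseteq> B t}"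
      using sum.inter_filter[of T "\<lambda>_. (1::nat)" "\<lambda>t. X \<subseteq> B t"] by (simp add: T_def)
    also have "\<dots> \<le> g - 1"
    proof (rule ccontr)
      assume "\<not> ?thesis"
      then have "g \<le> card {t\<in>T. X \<subseteq> B t}" using g by simp
      then obtain K where K: "K \<subseteq> {t\<in>T. X \<subseteq> B t}" "card K = g" "finite K"
        by (rule obtain_subset_with_card_n)
      have fX: "finite X" "card X = h" using that unfolding S_def by (auto intro: finite_subset)
      have "\<forall>k\<in>K. (\<lambda>x. x + k) ` X \<subseteq> A" using K(1) unfolding B_def by auto
      then show False using C fX K unfolding Ch_g_set_def by blast
    qed
    finally show ?thesis .
  qed
  have "(\<Sum>t\<in>T. card (B t) choose h) = (\<Sum>t\<in>T. \<Sum>X\<in>S. if X \<subseteq> B t then 1 else 0)"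
    using e1 by simp
  also have "\<dots> = (\<Sum>X\<in>S. \<Sum>t\<in>T. if X \<subseteq> B t then 1 else 0)" by (rule sum.swap)
  also have "\<dots> \<le> (\<Sum>X\<in>S. g - 1)" by (rule sum_mono) (use e2 in auto)
  also have "\<dots> = (g-1) * (m choose h)" using cardS by simp
  finally show ?thesis unfolding T_def B_def .
qed

lemma sum_card:
  assumes A: "A \<subseteq> {1..int n}"
  shows "(\<Sum>t\<in>{1 - int m..int n - 1}. card {x\<in>{1..int m}. x + t \<in> A}) = m * card A"
proof -
  define T where "T = {1 - int m..int n - 1}"
  have finA: "finite A" using A finite_subset by blast
  have "(\<Sum>t\<in>T. card {x\<in>{1..int m}. x + t \<in> A}) = (\<Sum>t\<in>T. \<Sum>x\<in>{1..int m}. if x + t \<in> A then 1 else 0)"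
    by (rule sum.cong) (auto simp: sum.inter_filter[symmetric])
  also have "\<dots> = (\<Sum>x\<in>{1..int m}. \<Sum>t\<in>T. if x + t \<in> A then 1 else 0)" by (rule sum.swap)
  also have "\<dots> = (\<Sum>x\<in>{1..int m}. card A)"
  proof (rule sum.cong[OF refl])
    fix x assume x: "x \<in> {1..int m}"
    have "(\<Sum>t\<in>T. if x + t \<in> A then 1 else (0::nat)) = card {t\<in>T. x + t \<in> A}"
      using sum.inter_filter[of T "\<lambda>_. (1::nat)" "\<lambda>t. x + t \<in> A"] by (simp add: T_def)
    also have "{t\<in>T. x + t \<in> A} = (\<lambda>a. a - x) ` A"
    proof
      show "{t\<in>T. x + t \<in> A} \<subseteq> (\<lambda>a. a - x) ` A"
        by (auto simp: image_iff intro!: bexI[where x="x + _"])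
      show "(\<lambda>a. a - x) ` A \<subseteq> {t\<in>T. x + t \<in> A}" using A x by (auto simp: T_def)
    qed
    also have "card \<dots> = card A" by (rule card_image) (auto simp: inj_on_def)
    finally show "(\<Sum>t\<in>T. if x + t \<in> A then 1 else 0) = card A" .
  qed
  also have "\<dots> = m * card A" by simp
  finally show ?thesis unfolding T_def .
qed



lemma ff_lower:
  "(max 0 (real b - (real h - 1)))^h \<le> fact h * real (b choose h)"
proof (cases "h \<le> b + 1")
  case True
  have "fact h * real (b choose h) = (\<Prod>i = 0..<h. real b - of_nat i)"
    using gbinomial_mult_fact[of h "real b"] by (simp add: binomial_gbinomial)
  also have "\<dots> \<ge> (\<Prod>i = 0..<h. max 0 (real b - (real h - 1)))"
    by (rule prod_mono) (use True in auto)
  finally show ?thesis by simp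
next
  case False
  then have "max 0 (real b - (real h - 1)) = 0" by simp
  moreover have "h \<noteq> 0" using False by simp
  ultimately show ?thesis by (simp add: zero_power)
qed

lemma ff_upper: "fact h * real (m choose h) \<le> real m ^ h"
proof (cases "h \<le> m")
  case True
  have "fact h * real (m choose h) = (\<Prod>i = 0..<h. real m - of_nat i)"
    using gbinomial_mult_fact[of h "real m"] by (simp add: binomial_gbinomial)
  also have "\<dots> \<le> (\<Prod>i = 0..<h. real m)"
    by (rule prod_mono) (use True in auto)
  finally show ?thesis by simp
next
  case False
  then show ?thesis by (simp add: binomial_eq_0)
qed

lemma tangent:
  fixes y \<mu> :: real
  assumes "y \<ge> 0" "\<mu> > 0" "h \<ge> 1"
  shows "\<mu>^h + real h * \<mu>^(h-1) * (y - \<mu>) \<le> y^h"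
proof -
  have "1 + real h * ((y - \<mu>)/\<mu>) \<le> (1 + (y - \<mu>)/\<mu>)^h"
    by (rule Bernoulli_inequality) (use assms in \<open>simp add: field_simps\<close>)
  also have "1 + (y - \<mu>)/\<mu> = y / \<mu>" using assms by (simp add: field_simps)
  finally have "\<mu>^h * (1 + real h * ((y - \<mu>)/\<mu>)) \<le> \<mu>^h * (y/\<mu>)^h"
    using assms by (intro mult_left_mono) auto
  also have "\<mu>^h * (y/\<mu>)^h = y^h" using assms by (simp add: power_divide)
  also have "\<mu>^h * (1 + real h * ((y - \<mu>)/\<mu>)) = \<mu>^h + real h * (\<mu>^h / \<mu>) * (y - \<mu>)"
    using assms by (simp add: field_simps)
  also have "\<mu>^h / \<mu> = \<mu>^(h-1)"
  proof (cases h)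
    case 0 then show ?thesis using assms by simp
  next
    case (Suc k) then show ?thesis using assms by simp
  qed
  finally show ?thesis .
qed

lemma power_mean:
  fixes y :: "'a \<Rightarrow> real"
  assumes h: "h \<ge> 1" and fin: "finite T" and ne: "T \<noteq> {}" and pos: "\<And>t. t \<in> T \<Longrightarrow> y t \<ge> 0"
  shows "real (card T) * ((\<Sum>t\<in>T. y t) / real (card T))^h \<le> (\<Sum>t\<in>T. y t ^ h)"
proof -
  define N where "N = real (card T)"
  have N: "N > 0" using fin ne by (simp add: N_def card_gt_0_iff)
  define \<mu> where "\<mu> = (\<Sum>t\<in>T. y t) / N"
  have "\<mu> \<ge> 0" unfolding \<mu>_def using pos N by (auto intro: sum_nonneg divide_nonneg_pos)
  show ?thesis
  proof (cases "\<mu> = 0")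
    case True
    then show ?thesis
      using pos by (cases h) (auto simp: \<mu>_def N_def[symmetric] intro!: sum_nonneg)
  next
    case False
    with \<open>\<mu> \<ge> 0\<close> have mu: "\<mu> > 0" by simp
    have "(\<Sum>t\<in>T. \<mu>^h + real h * \<mu>^(h-1) * (y t - \<mu>)) \<le> (\<Sum>t\<in>T. y t ^ h)"
      by (rule sum_mono) (use tangent[OF _ mu h] pos in auto)
    also have "(\<Sum>t\<in>T. \<mu>^h + real h * \<mu>^(h-1) * (y t - \<mu>))
        = N * \<mu>^h + real h * \<mu>^(h-1) * ((\<Sum>t\<in>T. y t) - N * \<mu>)"
      by (simp add: sum.distrib sum_distrib_left[symmetric] sum_subtractf N_def)
    also have "(\<Sum>t\<in>T. y t) - N * \<mu> = 0" using N by (simp add: \<mu>_def)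
    finally show ?thesis by (simp add: N_def \<mu>_def)
  qed
qed



lemma root_step:
  fixes R N G M :: real and h :: nat
  assumes h: "h \<ge> 1" and N: "N > 0" and R: "R \<ge> 0" and M: "M \<ge> 0" and G: "G > 0"
    and ineq: "N * (R / N)^h \<le> G * M^h"
  shows "R \<le> G powr (1 / real h) * M * N powr (1 - 1 / real h)"
proof (rule ccontr)
  assume "\<not> ?thesis"
  moreover have "N powr (1 - 1 / real h) = N * N powr (- 1 / real h)"
  proof -
    have "N powr (1 + (- 1 / real h)) = N powr 1 * N powr (- 1 / real h)" by (rule powr_add)
    moreover have "N powr (1 - 1 / real h) = N powr (1 + (- 1 / real h))"
      by (rule arg_cong[where f="\<lambda>x. N powr x"]) simp
    moreover have "N powr 1 = N" using N by (simp only: powr_one_gt_zero_iff less_imp_le)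
    ultimately show ?thesis by metis
  qed
  ultimately have "G powr (1 / real h) * M * N powr (- 1 / real h) * N < R"
    by (simp add: mult_ac)
  then have lt: "G powr (1 / real h) * M * N powr (- 1 / real h) < R / N"
    using N by (simp add: field_simps)
  have "0 \<le> G powr (1 / real h) * M * N powr (- 1 / real h)" using M by simp
  then have "(G powr (1 / real h) * M * N powr (- 1 / real h))^h < (R / N)^h"
    using lt h by (intro power_strict_mono) auto
  also have "(G powr (1 / real h) * M * N powr (- 1 / real h))^h = G * M^h / N"
    using G N h by (simp add: power_mult_distrib powr_power powr_neg_one)
  finally have "G * M^h < N * (R/N)^h" using N by (simp add: field_simps)
  with ineq show False by simp
qed

lemma window_bound:
  assumes h: "h \<ge> 1" and g: "g \<ge> 2" and n: "n \<ge> 1" and m: "m \<ge> 1"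
    and A: "A \<subseteq> {1..int n}" and C: "Ch_g_set h g A"
  shows "real (card A) \<le> (real g - 1) powr (1 / real h) * real (n + m - 1) powr (1 - 1 / real h)
           + real (n + m - 1) * (real h - 1) / real m"
proof -
  define T where "T = {1 - int m..int n - 1}"
  define b where "b t = card {x\<in>{1..int m}. x + t \<in> A}" for t
  define y where "y t = max 0 (real (b t) - (real h - 1))" for t
  define N where "N = real (n + m - 1)"
  define a where "a = real (card A)"
  have cT: "card T = n + m - 1" unfolding T_def using n m by simp
  have finT: "finite T" "T \<noteq> {}" using n m by (auto simp: T_def)
  have N: "N \<ge> 1" using n m by (simp add: N_def)
  have "(\<Sum>t\<in>T. real (b t) - (real h - 1)) \<le> (\<Sum>t\<in>T. y t)"
    by (rule sum_mono) (simp add: y_def)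
  also have "(\<Sum>t\<in>T. real (b t) - (real h - 1)) = real m * a - N * (real h - 1)"
    using sum_card[OF A, of m] cT
    by (simp add: sum_subtractf b_def T_def a_def N_def flip: of_nat_sum)
  finally have Ysum: "real m * a - N * (real h - 1) \<le> (\<Sum>t\<in>T. y t)" .
  have "(\<Sum>t\<in>T. y t ^ h) \<le> (\<Sum>t\<in>T. fact h * real (b t choose h))"
    by (rule sum_mono) (simp add: y_def ff_lower)
  also have "\<dots> = fact h * real (\<Sum>t\<in>T. b t choose h)" by (simp add: sum_distrib_left)
  also have "\<dots> \<le> fact h * real ((g - 1) * (m choose h))"
  proof -
    have "(\<Sum>t\<in>T. b t choose h) \<le> (g - 1) * (m choose h)"
      using count_le[OF A C, of m] g by (simp add: T_def b_def)
    then have "real (\<Sum>t\<in>T. b t choose h) \<le> real ((g - 1) * (m choose h))"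
      by (simp only: of_nat_le_iff)
    then show ?thesis by (intro mult_left_mono) auto
  qed
  also have "\<dots> = (real g - 1) * (fact h * real (m choose h))" using g by (simp add: of_nat_diff)
  also have "\<dots> \<le> (real g - 1) * real m ^ h" using g by (intro mult_left_mono ff_upper) auto
  finally have pw: "(\<Sum>t\<in>T. y t ^ h) \<le> (real g - 1) * real m ^ h" .
  have pm: "N * ((\<Sum>t\<in>T. y t) / N)^h \<le> (\<Sum>t\<in>T. y t ^ h)"
    using power_mean[OF h finT, of y] cT by (simp add: y_def N_def)
  define R where "R = real m * a - N * (real h - 1)"
  have main: "real m * a - N * (real h - 1) \<le> (real g - 1) powr (1 / real h) * real m * N powr (1 - 1 / real h)"
  proof (cases "R \<le> 0")
    case True
    then show ?thesis using g by (simp add: R_def) (smt (verit) mult_nonneg_nonneg powr_ge_zero of_nat_0_le_iff)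
  next
    case False
    have "R / N \<le> (\<Sum>t\<in>T. y t) / N" using Ysum N by (simp add: R_def divide_right_mono)
    then have "(R/N)^h \<le> ((\<Sum>t\<in>T. y t) / N)^h" using False N by (intro power_mono) auto
    then have "N * (R/N)^h \<le> (real g - 1) * real m ^ h"
      using pm pw N by (smt (verit) mult_left_mono)
    from root_step[OF h _ _ _ _ this] False N g show ?thesis by (simp add: R_def)
  qed
  then have "real m * a \<le> real m * ((real g - 1) powr (1 / real h) * N powr (1 - 1 / real h) + N * (real h - 1) / real m)"
  proof -
    have "real m * ((real g - 1) powr (1 / real h) * N powr (1 - 1 / real h) + N * (real h - 1) / real m)
       = (real g - 1) powr (1 / real h) * real m * N powr (1 - 1 / real h) + N * (real h - 1)"
      using m by (simp add: distrib_left mult_ac)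
    then show ?thesis using main by linarith
  qed
  then have "a \<le> (real g - 1) powr (1 / real h) * N powr (1 - 1 / real h) + N * (real h - 1) / real m"
    using m by (subst (asm) mult_le_cancel_left_pos) auto
  then show ?thesis by (simp add: a_def N_def)
qed



lemma final_bound:
  fixes g h n :: nat and A :: "int set"
  assumes h: "h \<ge> 2" and gh: "g \<ge> h" and n: "n \<ge> 1" and A: "A \<subseteq> {1..int n}" and C: "Ch_g_set h g A"
  shows "real (card A) \<le> (real g - 1) powr (1 / real h) * real n powr (1 - 1 / real h)
                       + (2 * (real g - 1) powr (1 / real h) + 2 * real h) * real n powr (1/2 - 1 / (2 * real h))"
proof -
  define e where "e = (1::real)/2 - 1 / (2 * real h)"
  define \<theta> where "\<theta> = 1 - 1 / real h"
  define G where "G = (real g - 1) powr (1 / real h)"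
  define x where "x = real n"
  have x: "x \<ge> 1" using n by (simp add: x_def)
  have hpos: "real h \<ge> 2" using h by simp
  have e0: "e \<ge> 0" "e \<le> 1/2" using hpos by (auto simp: e_def field_simps)
  have th: "0 \<le> \<theta>" "\<theta> \<le> 1" using hpos by (auto simp: \<theta>_def field_simps)
  have G0: "G \<ge> 0" by (simp add: G_def)
  define s where "s = x powr (1 - e)"
  have s1: "s \<ge> 1" unfolding s_def using x e0 by (intro ge_one_powr_ge_zero) auto
  define m where "m = nat \<lceil>s\<rceil>"
  have ms: "s \<le> real m" "real m \<le> s + 1" using s1 by (auto simp: m_def)
  have m1: "m \<ge> 1" using ms s1 by simp
  have WB: "real (card A) \<le> G * (x + real m - 1) powr \<theta> + (x + real m - 1) * (real h - 1) / real m"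
    using window_bound[OF _ _ n m1 A C] h gh n m1
    by (simp add: G_def \<theta>_def x_def of_nat_diff)
  have xe: "x powr e \<ge> 1" using x e0 by (intro ge_one_powr_ge_zero) auto
  have "(x + real m - 1) powr \<theta> \<le> (x * (1 + real m / x)) powr \<theta>"
    using x m1 th by (intro powr_mono2) (auto simp: field_simps)
  also have "\<dots> = x powr \<theta> * (1 + real m / x) powr \<theta>" using x by (simp add: powr_mult)
  also have "(1 + real m / x) powr \<theta> \<le> (1 + real m / x) powr 1"
    using x th by (intro powr_mono) auto
  then have "x powr \<theta> * (1 + real m / x) powr \<theta> \<le> x powr \<theta> * (1 + real m / x)"
    using x by (intro mult_left_mono) auto
  also have "x powr \<theta> * (1 + real m / x) = x powr \<theta> + real m * (x powr \<theta> / x)"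
    using x by (simp add: field_simps)
  finally have t1: "(x + real m - 1) powr \<theta> \<le> x powr \<theta> + real m * (x powr \<theta> / x)" .
  have "x powr \<theta> / x = x powr (\<theta> - 1)"
    using x powr_diff[of x \<theta> 1] by simp
  then have "real m * (x powr \<theta> / x) \<le> 2 * s * x powr (\<theta> - 1)"
  proof -
    have "real m \<le> 2 * s" using ms s1 by simp
    then have "real m * x powr (\<theta> - 1) \<le> 2 * s * x powr (\<theta> - 1)" by (intro mult_right_mono) auto
    with \<open>x powr \<theta> / x = x powr (\<theta> - 1)\<close> show ?thesis by simp
  qed
  also have "2 * s * x powr (\<theta> - 1) = 2 * x powr ((1 - e) + (\<theta> - 1))"
    using powr_add[of x "1 - e" "\<theta> - 1"] by (simp add: s_def)
  also have "(1 - e) + (\<theta> - 1) = e" using hpos by (simp add: e_def \<theta>_def field_simps)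
  finally have t2: "(x + real m - 1) powr \<theta> \<le> x powr \<theta> + 2 * x powr e" using t1 by simp
  have "(x + real m - 1) * (real h - 1) / real m \<le> (x / real m + 1) * (real h - 1)"
    using m1 hpos by (simp add: field_simps)
  also have "x / real m \<le> x / s" using ms s1 x by (intro divide_left_mono) auto
  then have "(x / real m + 1) * (real h - 1) \<le> (x / s + 1) * (real h - 1)"
    using hpos by (intro mult_right_mono) auto
  also have "x / s = x powr e"
  proof -
    have "x / s = x powr 1 / x powr (1 - e)" using x by (simp add: s_def)
    also have "\<dots> = x powr (1 - (1 - e))" by (rule powr_diff[symmetric])
    finally show ?thesis by simp
  qed
  finally have t3: "(x + real m - 1) * (real h - 1) / real m \<le> (x powr e + 1) * (real h - 1)" .
  have "real (card A) \<le> G * (x powr \<theta> + 2 * x powr e) + (x powr e + 1) * (real h - 1)"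
    using WB t2 t3 G0 by (smt (verit) mult_left_mono)
  also have "\<dots> \<le> G * x powr \<theta> + (2 * G + 2 * real h) * x powr e"
  proof -
    have hh: "real h * 1 \<le> real h * x powr e" using xe by (intro mult_left_mono) auto
    have gg: "G * 1 \<le> G * x powr e" using xe G0 by (intro mult_left_mono) auto
    show ?thesis using hh gg xe by (simp add: algebra_simps)
  qed
  finally show ?thesis by (simp add: G_def x_def e_def \<theta>_def)
qed


theorem theorem1:
  fixes g h :: nat
  assumes "h \<ge> 2" and "g \<ge> h"
  shows "\<exists>C::real. C > 0 \<and>
    (\<forall>(n::nat) (A::int set). n \<ge> 1 \<longrightarrow> A \<subseteq> {1..int n} \<longrightarrow> Ch_g_set h g A \<longrightarrow>
       real (card A) \<le> (real g - 1) powr (1 / real h) * real n powr (1 - 1 / real h)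
                       + C * real n powr (1/2 - 1 / (2 * real h)))"
proof (intro exI conjI allI impI)
  show "0 < 2 * (real g - 1) powr (1 / real h) + 2 * real h" using assms by (simp add: add_nonneg_pos)
next
  fix n :: nat and A :: "int set"
  assume "n \<ge> 1" "A \<subseteq> {1..int n}" "Ch_g_set h g A"
  then show "real (card A) \<le> (real g - 1) powr (1 / real h) * real n powr (1 - 1 / real h)
       + (2 * (real g - 1) powr (1 / real h) + 2 * real h) * real n powr (1/2 - 1 / (2 * real h))"
    using final_bound[OF assms] by blast
qed

end
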